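(* Let $A=(A_1,\dots,A_d)$ take values in $\{0,1\}^d$ with probabilities $p(a)>0$ for all $a$. For $b\in\{0,1\}^d$ define the linear interactions $\xi_b=\sum_{a\in\{0,1\}^d}(-1)^{a\cdot b}p(a)$ and the log-linear interactions $\lambda_b=2^{-d}\sum_{a\in\{0,1\}^d}(-1)^{a\cdot b}\log p(a)$, where $a\cdot b=\sum_v a_vb_v$. Then the following are equivalent: (1) $p$ is palindromic, i.e. $p(a)=p(\sim a)$ for all $a$; (2) $\xi_b=0$ for all $b$ with $|b|$ odd; (3) $\lambda_b=0$ for all $b$ with $|b|$ odd.
   Context: $\sim a$ denotes the complement of the binary vector $a$ ($(\sim a)_v=1-a_v$). For $b\in\{0,1\}^d$, $|b|=\sum_v b_v$ is its order; a vector $b$ is identified with the subset $\{v: b_v=1\}$ of $\{1,\dots,d\}$, and the interaction indexed by $b$ is called of odd or even order according to the parity of $|b|$. *)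

theory Defs
  imports Complex_Main
begin

text \<open>Binary vectors in {0,1}^d, coordinates indexed by 1..d, represented as
  functions nat => nat that are 0 outside {1..d}.\<close>
definition cube :: "nat \<Rightarrow> (nat \<Rightarrow> nat) set" where
  "cube d = {a. (\<forall>v\<in>{1..d}. a v \<in> {0,1}) \<and> (\<forall>v. v \<notin> {1..d} \<longrightarrow> a v = 0)}"

definition compl_vec :: "nat \<Rightarrow> (nat \<Rightarrow> nat) \<Rightarrow> (nat \<Rightarrow> nat)" where
  "compl_vec d a = (\<lambda>v. if v \<in> {1..d} then 1 - a v else 0)"

definition dot :: "nat \<Rightarrow> (nat \<Rightarrow> nat) \<Rightarrow> (nat \<Rightarrow> nat) \<Rightarrow> nat" where
  "dot d a b = (\<Sum>v=1..d. a v * b v)"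

definition order :: "nat \<Rightarrow> (nat \<Rightarrow> nat) \<Rightarrow> nat" where
  "order d b = (\<Sum>v=1..d. b v)"

definition palindromic :: "nat \<Rightarrow> ((nat \<Rightarrow> nat) \<Rightarrow> real) \<Rightarrow> bool" where
  "palindromic d p \<longleftrightarrow> (\<forall>a\<in>cube d. p a = p (compl_vec d a))"

definition linear_interaction :: "nat \<Rightarrow> ((nat \<Rightarrow> nat) \<Rightarrow> real) \<Rightarrow> (nat \<Rightarrow> nat) \<Rightarrow> real" where
  "linear_interaction d p b = (\<Sum>a\<in>cube d. (-1) ^ dot d a b * p a)"

definition loglinear_interaction :: "nat \<Rightarrow> ((nat \<Rightarrow> nat) \<Rightarrow> real) \<Rightarrow> (nat \<Rightarrow> nat) \<Rightarrow> real" where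
  "loglinear_interaction d p b = (1 / 2 ^ d) * (\<Sum>a\<in>cube d. (-1) ^ dot d a b * ln (p a))"

end

theory Submission
  imports Defs
begin

lemma compl_in: "a \<in> cube d \<Longrightarrow> compl_vec d a \<in> cube d"
  by (auto simp: cube_def compl_vec_def)

lemma compl_compl: "a \<in> cube d \<Longrightarrow> compl_vec d (compl_vec d a) = a"
  unfolding cube_def compl_vec_def
proof (rule ext)
  fix v assume a: "a \<in> {a. (\<forall>v\<in>{1..d}. a v \<in> {0, 1}) \<and> (\<forall>v. v \<notin> {1..d} \<longrightarrow> a v = 0)}"
  show "(if v \<in> {1..d} then 1 - (if v \<in> {1..d} then 1 - a v else 0) else 0) = a v"
  proof (cases "v \<in> {1..d}")
    case True
    then have "a v = 0 \<or> a v = 1" using a by auto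
    then show ?thesis using True by auto
  qed (use a in auto)
qed

lemma cube_finite: "finite (cube d)"
proof -
  have "cube d \<subseteq> (\<lambda>S v. if v \<in> S then 1 else 0) ` Pow {1..d}"
  proof
    fix a assume a: "a \<in> cube d"
    have "a = (\<lambda>v. if v \<in> {v\<in>{1..d}. a v = 1} then 1 else 0)"
      using a unfolding cube_def by (intro ext) auto
    thus "a \<in> (\<lambda>S v. if v \<in> S then 1 else 0) ` Pow {1..d}" by blast
  qed
  thus ?thesis by (rule finite_subset) auto
qed

lemma cube_card_pos: "card (cube d) > 0"
proof -
  have "(\<lambda>_. 0) \<in> cube d" by (auto simp: cube_def)
  thus ?thesis using cube_finite card_gt_0_iff by blast
qed

lemma dot_compl: "a \<in> cube d \<Longrightarrow> dot d (compl_vec d a) b + dot d a b = order d b"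
  unfolding dot_def order_def sum.distrib[symmetric]
proof (rule sum.cong)
  fix x assume a: "a \<in> cube d" and x: "x \<in> {1..d}"
  then have "a x = 0 \<or> a x = 1" by (auto simp: cube_def)
  then show "compl_vec d a x * b x + a x * b x = b x" using x by (auto simp: compl_vec_def)
qed simp

lemma sign_compl: "a \<in> cube d \<Longrightarrow>
   (-1::real) ^ dot d (compl_vec d a) b = (-1) ^ order d b * (-1) ^ dot d a b"
proof -
  assume a: "a \<in> cube d"
  have "(-1::real) ^ order d b * (-1) ^ dot d a b
      = (-1) ^ dot d (compl_vec d a) b * ((-1) ^ dot d a b * (-1) ^ dot d a b)"
    using dot_compl[OF a, of b, symmetric] by (simp add: power_add)
  also have "(-1::real) ^ dot d a b * (-1) ^ dot d a b = 1"
    by (simp add: power_add[symmetric])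
  finally show ?thesis by simp
qed

lemma reindex_compl: "(\<Sum>a\<in>cube d. h (compl_vec d a)) = (\<Sum>a\<in>cube d. (h a :: real))"
  by (rule sum.reindex_bij_witness[where i="compl_vec d" and j="compl_vec d"])
     (auto simp: compl_in compl_compl)

lemma orth:
  assumes a: "a \<in> cube d" and c: "c \<in> cube d"
  shows "(\<Sum>b\<in>cube d. (-1::real) ^ dot d a b * (-1) ^ dot d c b)
         = (if a = c then real (card (cube d)) else 0)"
proof (cases "a = c")
  case True
  have "\<And>b. (-1::real) ^ dot d a b * (-1) ^ dot d a b = 1"
    by (simp add: power_add[symmetric])
  thus ?thesis using True by simp
next
  case False
  then obtain v where "a v \<noteq> c v" by auto
  have v: "v \<in> {1..d}"
  proof (rule ccontr)
    assume "v \<notin> {1..d}"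
    then have "a v = 0" "c v = 0" using a c by (auto simp: cube_def)
    then show False using \<open>a v \<noteq> c v\<close> by simp
  qed
  have "a v = 0 \<or> a v = 1" "c v = 0 \<or> c v = 1" using a c v by (auto simp: cube_def)
  then have acv: "a v + c v = 1" using \<open>a v \<noteq> c v\<close> by auto
  define q where "q b = (\<Prod>w\<in>{1..d}. (-1::real) ^ ((a w + c w) * b w))" for b
  have qeq: "(-1::real) ^ dot d a b * (-1) ^ dot d c b = q b" for b
    unfolding q_def dot_def power_sum prod.distrib[symmetric] power_add[symmetric]
    by (simp add: algebra_simps)
  define fl where "fl b = b(v := 1 - b v)" for b :: "nat \<Rightarrow> nat"
  have fl_in: "b \<in> cube d \<Longrightarrow> fl b \<in> cube d" for b
    using v by (auto simp: cube_def fl_def)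
  have fl_fl: "b \<in> cube d \<Longrightarrow> fl (fl b) = b" for b
  proof -
    assume "b \<in> cube d"
    then have "b v = 0 \<or> b v = 1" using v by (auto simp: cube_def)
    then show ?thesis by (auto simp: fl_def)
  qed
  have qfl: "b \<in> cube d \<Longrightarrow> q (fl b) = - q b" for b
  proof -
    assume b: "b \<in> cube d"
    have rest: "(\<Prod>w\<in>{1..d}-{v}. (-1::real) ^ ((a w + c w) * fl b w))
              = (\<Prod>w\<in>{1..d}-{v}. (-1::real) ^ ((a w + c w) * b w))"
      by (rule prod.cong) (auto simp: fl_def)
    have bv: "b v = 0 \<or> b v = 1" using b v by (auto simp: cube_def)
    have "q (fl b) = (-1) ^ ((a v + c v) * fl b v) * (\<Prod>w\<in>{1..d}-{v}. (-1::real) ^ ((a w + c w) * fl b w))"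
      unfolding q_def using v by (simp add: prod.remove)
    moreover have "q b = (-1) ^ ((a v + c v) * b v) * (\<Prod>w\<in>{1..d}-{v}. (-1::real) ^ ((a w + c w) * b w))"
      unfolding q_def using v by (simp add: prod.remove)
    ultimately show ?thesis using rest acv bv by (auto simp: fl_def)
  qed
  have "(\<Sum>b\<in>cube d. q b) = (\<Sum>b\<in>cube d. q (fl b))"
    by (rule sum.reindex_bij_witness[where i=fl and j=fl]) (auto simp: fl_in fl_fl)
  also have "\<dots> = - (\<Sum>b\<in>cube d. q b)"
    by (simp add: qfl sum_negf)
  finally have "(\<Sum>b\<in>cube d. q b) = 0" by simp
  thus ?thesis using False qeq by simp
qed

lemma inversion:
  assumes G: "\<forall>b\<in>cube d. (\<Sum>c\<in>cube d. (-1::real) ^ dot d c b * g c) = 0"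
    and a: "a \<in> cube d"
  shows "g a = 0"
proof -
  have "0 = (\<Sum>b\<in>cube d. (-1::real) ^ dot d a b * (\<Sum>c\<in>cube d. (-1::real) ^ dot d c b * g c))"
    using G by simp
  also have "\<dots> = (\<Sum>b\<in>cube d. \<Sum>c\<in>cube d. g c * ((-1::real) ^ dot d a b * (-1) ^ dot d c b))"
    by (simp add: sum_distrib_left algebra_simps)
  also have "\<dots> = (\<Sum>c\<in>cube d. g c * (\<Sum>b\<in>cube d. (-1::real) ^ dot d a b * (-1) ^ dot d c b))"
    by (subst sum.swap) (simp add: sum_distrib_left)
  also have "\<dots> = (\<Sum>c\<in>cube d. g c * (if a = c then real (card (cube d)) else 0))"
    by (rule sum.cong) (auto simp: orth a)
  also have "\<dots> = (\<Sum>c\<in>cube d. if a = c then g c * real (card (cube d)) else 0)"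
    by (rule sum.cong) auto
  also have "\<dots> = g a * real (card (cube d))"
    using a cube_finite by (simp add: sum.delta)
  finally show ?thesis using cube_card_pos[of d] by (metis mult_eq_0_iff of_nat_eq_0_iff not_gr0)
qed

lemma main:
  fixes f :: "(nat \<Rightarrow> nat) \<Rightarrow> real"
  shows "(\<forall>a\<in>cube d. f a = f (compl_vec d a)) \<longleftrightarrow>
    (\<forall>b\<in>cube d. odd (order d b) \<longrightarrow> (\<Sum>a\<in>cube d. (-1) ^ dot d a b * f a) = 0)"
proof -
  have key: "(\<Sum>a\<in>cube d. (-1) ^ dot d a b * f (compl_vec d a))
      = (-1) ^ order d b * (\<Sum>a\<in>cube d. (-1) ^ dot d a b * f a)" for b
  proof -
    have "(\<Sum>a\<in>cube d. (-1) ^ dot d a b * f (compl_vec d a))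
        = (\<Sum>a\<in>cube d. (-1) ^ dot d (compl_vec d (compl_vec d a)) b * f (compl_vec d a))"
      by (rule sum.cong) (auto simp: compl_compl)
    also have "\<dots> = (\<Sum>a\<in>cube d. (-1) ^ dot d (compl_vec d a) b * f a)"
      by (rule reindex_compl[where h="\<lambda>a. (-1) ^ dot d (compl_vec d a) b * f a"])
    also have "\<dots> = (\<Sum>a\<in>cube d. (-1) ^ order d b * ((-1) ^ dot d a b * f a))"
      by (rule sum.cong) (auto simp: sign_compl)
    finally show ?thesis by (simp add: sum_distrib_left)
  qed
  show ?thesis
  proof
    assume P: "\<forall>a\<in>cube d. f a = f (compl_vec d a)"
    show "\<forall>b\<in>cube d. odd (order d b) \<longrightarrow> (\<Sum>a\<in>cube d. (-1) ^ dot d a b * f a) = 0"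
    proof (intro ballI impI)
      fix b assume "odd (order d b)"
      moreover have "(\<Sum>a\<in>cube d. (-1) ^ dot d a b * f (compl_vec d a))
          = (\<Sum>a\<in>cube d. (-1) ^ dot d a b * f a)"
        by (rule sum.cong) (auto simp: P[rule_format, symmetric])
      ultimately show "(\<Sum>a\<in>cube d. (-1) ^ dot d a b * f a) = 0"
        using key[of b] by simp
    qed
  next
    assume O: "\<forall>b\<in>cube d. odd (order d b) \<longrightarrow> (\<Sum>a\<in>cube d. (-1) ^ dot d a b * f a) = 0"
    have G: "\<forall>b\<in>cube d. (\<Sum>c\<in>cube d. (-1::real) ^ dot d c b * (f c - f (compl_vec d c))) = 0"
    proof
      fix b assume b: "b \<in> cube d"
      have "(\<Sum>c\<in>cube d. (-1::real) ^ dot d c b * (f c - f (compl_vec d c)))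
         = (\<Sum>a\<in>cube d. (-1) ^ dot d a b * f a) - (-1) ^ order d b * (\<Sum>a\<in>cube d. (-1) ^ dot d a b * f a)"
        by (simp add: right_diff_distrib sum_subtractf key)
      thus "(\<Sum>c\<in>cube d. (-1::real) ^ dot d c b * (f c - f (compl_vec d c))) = 0"
        using O b by (cases "even (order d b)") auto
    qed
    show "\<forall>a\<in>cube d. f a = f (compl_vec d a)"
      using inversion[OF G] by simp
  qed
qed

theorem proposition2p2:
  fixes d :: nat and p :: "(nat \<Rightarrow> nat) \<Rightarrow> real"
  assumes pos: "\<forall>a\<in>cube d. p a > 0"
    and sum1: "(\<Sum>a\<in>cube d. p a) = 1"
  shows "(palindromic d p \<longleftrightarrow>
           (\<forall>b\<in>cube d. odd (order d b) \<longrightarrow> linear_interaction d p b = 0))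
       \<and> (palindromic d p \<longleftrightarrow>
           (\<forall>b\<in>cube d. odd (order d b) \<longrightarrow> loglinear_interaction d p b = 0))"
proof
  show "palindromic d p \<longleftrightarrow>
           (\<forall>b\<in>cube d. odd (order d b) \<longrightarrow> linear_interaction d p b = 0)"
    unfolding palindromic_def linear_interaction_def by (rule main)
  have "palindromic d p \<longleftrightarrow> (\<forall>a\<in>cube d. ln (p a) = ln (p (compl_vec d a)))"
    unfolding palindromic_def using pos compl_in by (auto simp: ln_inj_iff)
  also have "\<dots> \<longleftrightarrow> (\<forall>b\<in>cube d. odd (order d b) \<longrightarrow> (\<Sum>a\<in>cube d. (-1) ^ dot d a b * ln (p a)) = 0)"
    by (rule main)
  also have "\<dots> \<longleftrightarrow> (\<forall>b\<in>cube d. odd (order d b) \<longrightarrow> loglinear_interaction d p b = 0)"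
    unfolding loglinear_interaction_def by simp
  finally show "palindromic d p \<longleftrightarrow>
           (\<forall>b\<in>cube d. odd (order d b) \<longrightarrow> loglinear_interaction d p b = 0)" .
qed

end
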